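(* For any finite tree $T$ and any integer $k\geq 1$, $\mathrm{box}(T^k)\leq k+1$.
   Context: $T^k$ is the $k$-th power of $T$: the graph on $V(T)$ in which distinct $u,v$ are adjacent iff their distance in $T$ is at most $k$. The boxicity $\mathrm{box}(G)$ of a graph $G$ is the minimum integer $t$ such that $G$ is the intersection graph of axis-parallel $t$-dimensional boxes (Cartesian products of $t$ closed real intervals), i.e. there is a map $f$ from $V(G)$ to such boxes with $(u,v)\in E(G)\iff f(u)\cap f(v)\neq\emptyset$ for distinct $u,v$. *)

theory Defs
  imports Main "HOL-Library.Extended_Real"
begin

definition simple_graph :: "'a set \<Rightarrow> ('a \<Rightarrow> 'a \<Rightarrow> bool) \<Rightarrow> bool" where
  "simple_graph V E \<longleftrightarrow> (\<forall>u v. E u v \<longrightarrow> u \<in> V \<and> v \<in> V \<and> u \<noteq> v \<and> E v u)"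

definition walk :: "'a set \<Rightarrow> ('a \<Rightarrow> 'a \<Rightarrow> bool) \<Rightarrow> 'a list \<Rightarrow> 'a \<Rightarrow> 'a \<Rightarrow> bool" where
  "walk V E xs u v \<longleftrightarrow> xs \<noteq> [] \<and> hd xs = u \<and> last xs = v \<and> set xs \<subseteq> V \<and>
     (\<forall>i. i + 1 < length xs \<longrightarrow> E (xs ! i) (xs ! (i + 1)))"

definition connected_graph :: "'a set \<Rightarrow> ('a \<Rightarrow> 'a \<Rightarrow> bool) \<Rightarrow> bool" where
  "connected_graph V E \<longleftrightarrow> (\<forall>u\<in>V. \<forall>v\<in>V. \<exists>xs. walk V E xs u v)"

definition is_cycle :: "'a set \<Rightarrow> ('a \<Rightarrow> 'a \<Rightarrow> bool) \<Rightarrow> 'a list \<Rightarrow> bool" where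
  "is_cycle V E xs \<longleftrightarrow> length xs \<ge> 3 \<and> distinct xs \<and> walk V E xs (hd xs) (last xs) \<and> E (last xs) (hd xs)"

definition acyclic_graph :: "'a set \<Rightarrow> ('a \<Rightarrow> 'a \<Rightarrow> bool) \<Rightarrow> bool" where
  "acyclic_graph V E \<longleftrightarrow> \<not> (\<exists>xs. is_cycle V E xs)"

definition finite_tree :: "'a set \<Rightarrow> ('a \<Rightarrow> 'a \<Rightarrow> bool) \<Rightarrow> bool" where
  "finite_tree V E \<longleftrightarrow> finite V \<and> V \<noteq> {} \<and> simple_graph V E \<and> connected_graph V E \<and> acyclic_graph V E"

definition dist_le :: "'a set \<Rightarrow> ('a \<Rightarrow> 'a \<Rightarrow> bool) \<Rightarrow> 'a \<Rightarrow> 'a \<Rightarrow> nat \<Rightarrow> bool" where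
  "dist_le V E u v k \<longleftrightarrow> (\<exists>xs. walk V E xs u v \<and> length xs - 1 \<le> k)"

definition graph_power :: "'a set \<Rightarrow> ('a \<Rightarrow> 'a \<Rightarrow> bool) \<Rightarrow> nat \<Rightarrow> 'a \<Rightarrow> 'a \<Rightarrow> bool" where
  "graph_power V E k u v \<longleftrightarrow> u \<in> V \<and> v \<in> V \<and> u \<noteq> v \<and> dist_le V E u v k"

text \<open>The t-dimensional axis-parallel box with lower corner l and upper corner h
  (coordinates 0..t-1; requires l i \<le> h i, i.e. closed nonempty intervals).\<close>
definition box_set :: "nat \<Rightarrow> (nat \<Rightarrow> real) \<Rightarrow> (nat \<Rightarrow> real) \<Rightarrow> (nat \<Rightarrow> real) set" where
  "box_set t l h = {x. (\<forall>i<t. l i \<le> x i \<and> x i \<le> h i) \<and> (\<forall>i\<ge>t. x i = 0)}"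

definition box_representation :: "'a set \<Rightarrow> ('a \<Rightarrow> 'a \<Rightarrow> bool) \<Rightarrow> nat \<Rightarrow> bool" where
  "box_representation V E t \<longleftrightarrow>
     (\<exists>l h :: 'a \<Rightarrow> nat \<Rightarrow> real.
        (\<forall>v\<in>V. \<forall>i<t. l v i \<le> h v i) \<and>
        (\<forall>u\<in>V. \<forall>v\<in>V. u \<noteq> v \<longrightarrow>
            (E u v \<longleftrightarrow> box_set t (l u) (h u) \<inter> box_set t (l v) (h v) \<noteq> {})))"

definition boxicity :: "'a set \<Rightarrow> ('a \<Rightarrow> 'a \<Rightarrow> bool) \<Rightarrow> nat" where
  "boxicity V E = (LEAST t. box_representation V E t)"

end

theory Submission
  imports Defs
begin



fun reach :: "('a \<Rightarrow> 'a \<Rightarrow> bool) \<Rightarrow> nat \<Rightarrow> 'a \<Rightarrow> 'a \<Rightarrow> bool" where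
  "reach E 0 u v = (u = v)"
| "reach E (Suc m) u v = (u = v \<or> (\<exists>w. E u w \<and> reach E m w v))"
lemma reach_refl[simp]: "reach E m u u"
  by (cases m) auto

lemma reach_mono_Suc: "reach E m u v \<Longrightarrow> reach E (Suc m) u v"
proof (induction m arbitrary: u)
  case 0 then show ?case by simp
next
  case (Suc m)
  then show ?case by (metis reach.simps(2))
qed

lemma reach_mono: "m \<le> m' \<Longrightarrow> reach E m u v \<Longrightarrow> reach E m' u v"
proof -
  assume a: "m \<le> m'" "reach E m u v"
  have "reach E (m + d) u v" for d
    by (induction d) (use a reach_mono_Suc in \<open>simp_all del: reach.simps\<close>)
  then show ?thesis using a(1) le_Suc_ex by blast
qed

lemma reach_snoc: "reach E m u v \<Longrightarrow> E v w \<Longrightarrow> reach E (Suc m) u w"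
proof (induction m arbitrary: u)
  case 0 then show ?case by simp
next
  case (Suc m)
  show ?case
  proof (cases "u = v")
    case True
    then show ?thesis using Suc.prems(2) by (metis reach.simps(2) reach_refl)
  next
    case False
    then obtain x where "E u x" "reach E m x v" using Suc.prems(1) by auto
    then have "reach E (Suc m) x w" using Suc.IH Suc.prems(2) by blast
    then show ?thesis using \<open>E u x\<close> by (metis reach.simps(2))
  qed
qed

lemma reach_sym: assumes "\<And>x y. E x y \<Longrightarrow> E y x" shows "reach E m u v \<Longrightarrow> reach E m v u"
proof (induction m arbitrary: u)
  case 0 then show ?case by simp
next
  case (Suc m)
  show ?case
  proof (cases "u = v")
    case False
    then obtain w where w: "E u w" "reach E m w v" using Suc.prems by auto
    have "reach E m v w" using Suc.IH w(2) by blast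
    then show ?thesis using reach_snoc[of E m v w u] w(1) assms by blast
  qed simp
qed

lemma reach_Emono: "reach E m u v \<Longrightarrow> (\<And>x y. E x y \<Longrightarrow> E' x y) \<Longrightarrow> reach E' m u v"
proof (induction m arbitrary: u)
  case 0 then show ?case by simp
next
  case (Suc m)
  then show ?case by (metis reach.simps(2))
qed


lemma succ_nth: "successively E xs \<longleftrightarrow> (\<forall>i. i + 1 < length xs \<longrightarrow> E (xs ! i) (xs ! (i + 1)))"
proof (induction E xs rule: successively.induct)
  case (3 E x y xs)
  show ?case
  proof
    assume a: "successively E (x # y # xs)"
    show "\<forall>i. i + 1 < length (x # y # xs) \<longrightarrow> E ((x # y # xs) ! i) ((x # y # xs) ! (i + 1))"
    proof (intro allI impI)
      fix i assume "i + 1 < length (x # y # xs)"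
      then show "E ((x # y # xs) ! i) ((x # y # xs) ! (i + 1))"
        using a 3 by (cases i) auto
    qed
  next
    assume a: "\<forall>i. i + 1 < length (x # y # xs) \<longrightarrow> E ((x # y # xs) ! i) ((x # y # xs) ! (i + 1))"
    have "E x y" using a[rule_format, of 0] by simp
    moreover have "\<forall>i. i + 1 < length (y # xs) \<longrightarrow> E ((y # xs) ! i) ((y # xs) ! (i + 1))"
      using a[rule_format, of "Suc _"] by auto
    ultimately show "successively E (x # y # xs)" using 3 by simp
  qed
qed auto

lemma walk_alt: "walk V E xs u v \<longleftrightarrow> xs \<noteq> [] \<and> hd xs = u \<and> last xs = v \<and> set xs \<subseteq> V \<and> successively E xs"
  unfolding walk_def succ_nth by auto

lemma simple_E: "simple_graph V E \<Longrightarrow> E u v \<Longrightarrow> u \<in> V \<and> v \<in> V \<and> u \<noteq> v \<and> E v u"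
  unfolding simple_graph_def by blast

lemma reach_walk: assumes sg: "simple_graph V E" and "u \<in> V" and "reach E m u v"
  shows "\<exists>xs. walk V E xs u v \<and> length xs - 1 \<le> m"
  using assms(2,3)
proof (induction m arbitrary: u)
  case 0 then show ?case by (intro exI[of _ "[u]"]) (auto simp: walk_alt)
next
  case (Suc m)
  show ?case
  proof (cases "u = v")
    case True then show ?thesis using Suc by (intro exI[of _ "[u]"]) (auto simp: walk_alt)
  next
    case False
    then obtain w where w: "E u w" "reach E m w v" using Suc by auto
    then have "w \<in> V" using simple_E[OF sg] by blast
    then obtain xs where xs: "walk V E xs w v" "length xs - 1 \<le> m" using Suc.IH w(2) by blast
    have x2: "xs \<noteq> []" "hd xs = w" "last xs = v" "set xs \<subseteq> V" "successively E xs"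
      using xs(1) unfolding walk_alt by auto
    have "walk V E (u # xs) u v" unfolding walk_alt using x2 w(1) Suc.prems(1)
      by (simp add: successively_Cons)
    moreover have "length (u # xs) - 1 \<le> Suc m" using xs(2) x2(1) by (cases xs) auto
    ultimately show ?thesis by blast
  qed
qed

lemma walk_reach: "xs \<noteq> [] \<Longrightarrow> successively E xs \<Longrightarrow> reach E (length xs - 1) (hd xs) (last xs)"
proof (induction xs)
  case (Cons x xs)
  then show ?case
    by (cases xs) (auto simp: successively_Cons)
qed simp

lemma dist_le_reach: assumes sg: "simple_graph V E" and "u \<in> V"
  shows "dist_le V E u v m \<longleftrightarrow> reach E m u v"
proof
  assume "dist_le V E u v m"
  then obtain xs where "walk V E xs u v" "length xs - 1 \<le> m" unfolding dist_le_def by blast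
  then have "xs \<noteq> []" "hd xs = u" "last xs = v" "successively E xs" by (auto simp: walk_alt)
  then have "reach E (length xs - 1) u v" using walk_reach[of xs E] by simp
  then show "reach E m u v" by (rule reach_mono[OF \<open>length xs - 1 \<le> m\<close>])
next
  assume "reach E m u v"
  then show "dist_le V E u v m" using reach_walk[OF sg assms(2)] unfolding dist_le_def by blast
qed




lemma connected_reach: "connected_graph V E \<Longrightarrow> u \<in> V \<Longrightarrow> v \<in> V \<Longrightarrow> \<exists>m. reach E m u v"
proof -
  assume "connected_graph V E" "u \<in> V" "v \<in> V"
  then obtain xs where "walk V E xs u v" unfolding connected_graph_def by blast
  then show ?thesis unfolding walk_alt using walk_reach[of xs E] by blast
qed

lemma leaf_exists:
  assumes T: "finite_tree V E" and two: "u \<in> V" "v \<in> V" "u \<noteq> v"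
  shows "\<exists>l q. l \<in> V \<and> E l q \<and> (\<forall>y. E l y \<longrightarrow> y = q)"
proof -
  have fin: "finite V" and sg: "simple_graph V E" and con: "connected_graph V E"
    and ac: "acyclic_graph V E" using T unfolding finite_tree_def by auto
  obtain m where "reach E m u v" using connected_reach[OF con two(1,2)] by blast
  then obtain w where uw: "E u w" using two(3) by (cases m) (simp_all, blast)
  define P where "P xs \<longleftrightarrow> distinct xs \<and> successively E xs \<and> set xs \<subseteq> V \<and> length xs \<ge> 2" for xs
  have P0: "P [u, w]" using simple_E[OF sg uw] uw unfolding P_def by auto
  have bnd: "\<forall>xs. P xs \<longrightarrow> length xs < Suc (card V)"
  proof (intro allI impI)
    fix ys assume "P ys"
    then have "length ys = card (set ys)" "card (set ys) \<le> card V"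
      using distinct_card[of ys] card_mono[OF fin, of "set ys"] unfolding P_def by auto
    then show "length ys < Suc (card V)" by simp
  qed
  obtain xs where Pxs: "P xs" and mx: "\<forall>ys. P ys \<longrightarrow> length ys \<le> length xs"
    using ex_has_greatest_nat[of P "[u,w]" length "Suc (card V)"] P0 bnd by blast
  define n where "n = length xs"
  have n2: "n \<ge> 2" using Pxs unfolding P_def n_def by auto
  define l where "l = last xs"
  define q where "q = xs ! (n - 2)"
  have dxs: "distinct xs" and sxs: "successively E xs" and vxs: "set xs \<subseteq> V"
    using Pxs unfolding P_def by auto
  have nth_E: "E (xs ! i) (xs ! (i + 1))" if "i + 1 < n" for i
    using sxs that unfolding succ_nth n_def by blast
  have xne: "xs \<noteq> []" using n2 n_def by auto
  have lxs: "l = xs ! (n - 1)" unfolding l_def n_def using last_conv_nth[OF xne] .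
  have e1: "n - 2 + 1 = n - 1" "n - 2 + 1 < n" using n2 by auto
  have Eql: "E q l" using nth_E[OF e1(2)] unfolding q_def lxs e1(1) .
  have "l \<in> V" using vxs last_in_set[OF xne] unfolding l_def by blast
  moreover have "E l q" using simple_E[OF sg Eql] by blast
  moreover have "\<forall>y. E l y \<longrightarrow> y = q"
  proof (intro allI impI)
    fix z assume lz: "E l z"
    have zin: "z \<in> set xs"
    proof (rule ccontr)
      assume "z \<notin> set xs"
      then have "P (xs @ [z])" using Pxs simple_E[OF sg lz] lz unfolding P_def l_def
        by (auto simp: successively_append_iff)
      then show False using mx by fastforce
    qed
    then obtain i where i: "i < n" "xs ! i = z" unfolding n_def by (metis in_set_conv_nth)
    show "z = q"
    proof (rule ccontr)
      assume zq: "z \<noteq> q"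
      have "i \<noteq> n - 1" using i lxs simple_E[OF sg lz] by auto
      moreover have "i \<noteq> n - 2" using i zq q_def by auto
      ultimately have ile: "i + 3 \<le> n" using i(1) n2 by linarith
      define ys where "ys = drop i xs"
      have "is_cycle V E ys"
        unfolding is_cycle_def walk_alt
      proof (intro conjI)
        show "3 \<le> length ys" using ile unfolding ys_def n_def by simp
        show "distinct ys" using dxs unfolding ys_def by simp
        show "ys \<noteq> []" using ile unfolding ys_def n_def by simp
        show "set ys \<subseteq> V" using vxs set_drop_subset unfolding ys_def by fastforce
        show "successively E ys"
          unfolding succ_nth ys_def using nth_E n_def by (simp add: add.commute add.left_commute)
        have "last ys = l" unfolding ys_def l_def using ile n_def by simp
        moreover have "hd ys = z" unfolding ys_def using i n_def by (simp add: hd_drop_conv_nth)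
        ultimately show "E (last ys) (hd ys)" using lz by simp
      qed auto
      then show False using ac unfolding acyclic_graph_def by blast
    qed
  qed
  ultimately show ?thesis by blast
qed




definition rm :: "('a \<Rightarrow> 'a \<Rightarrow> bool) \<Rightarrow> 'a \<Rightarrow> 'a \<Rightarrow> 'a \<Rightarrow> bool" where
  "rm E l x y \<longleftrightarrow> E x y \<and> x \<noteq> l \<and> y \<noteq> l"

lemma F1:
  assumes sg: "simple_graph V E" and leaf: "\<forall>y. E l y \<longrightarrow> y = q"
  shows "reach E m u v \<Longrightarrow> u \<noteq> l \<Longrightarrow> v \<noteq> l \<Longrightarrow> reach (rm E l) m u v"
proof (induction m arbitrary: u rule: less_induct)
  case (less m)
  show ?case
  proof (cases "u = v")
    case True then show ?thesis by simp
  next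
    case False
    then obtain m' w where m: "m = Suc m'" and w: "E u w" "reach E m' w v"
      using less.prems(1) by (cases m) (simp_all, blast)
    show ?thesis
    proof (cases "w = l")
      case False
      then have "reach (rm E l) m' w v" using less.IH[of m' w] m w(2) less.prems(3) by blast
      moreover have "rm E l u w" using w(1) False less.prems(2) unfolding rm_def by blast
      ultimately show ?thesis unfolding m by (metis reach.simps(2))
    next
      case True
      have uq: "u = q" using leaf simple_E[OF sg w(1)] True by blast
      have "w \<noteq> v" using True less.prems(3) by blast
      then obtain m'' w2 where m': "m' = Suc m''" and w2: "E w w2" "reach E m'' w2 v"
        using w(2) by (cases m') (simp_all, blast)
      have "w2 = u" using leaf w2(1) True uq by blast
      then have "reach E m'' u v" using w2(2) by simp
      moreover have "m'' < m" using m m' by simp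
      ultimately have "reach (rm E l) m'' u v" using less.IH[of m'' u] less.prems(2,3) by blast
      then show ?thesis using reach_mono[of m'' m] m m' by simp
    qed
  qed
qed

lemma F2:
  assumes sg: "simple_graph V E" and leaf: "\<forall>y. E l y \<longrightarrow> y = q" and lq: "E l q" and vl: "v \<noteq> l"
  shows "reach E m l v \<longleftrightarrow> (\<exists>m'. m = Suc m' \<and> reach (rm E l) m' q v)"
proof
  assume "reach E m l v"
  then obtain m' w where m: "m = Suc m'" and w: "E l w" "reach E m' w v"
    using vl by (cases m) (simp_all, blast)
  have "w = q" using leaf w(1) by blast
  moreover have "q \<noteq> l" using simple_E[OF sg lq] by blast
  ultimately show "\<exists>m'. m = Suc m' \<and> reach (rm E l) m' q v"
    using F1[OF sg leaf w(2)] vl m by blast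
next
  assume "\<exists>m'. m = Suc m' \<and> reach (rm E l) m' q v"
  then obtain m' where m: "m = Suc m'" and r: "reach (rm E l) m' q v" by blast
  have "reach E m' q v" using reach_Emono[OF r] unfolding rm_def by blast
  then show "reach E m l v" unfolding m using lq by (metis reach.simps(2))
qed

lemma sub_tree:
  assumes T: "finite_tree V E" and lV: "l \<in> V" and lq: "E l q" and leaf: "\<forall>y. E l y \<longrightarrow> y = q"
  shows "finite_tree (V - {l}) (rm E l)"
proof -
  have fin: "finite V" and sg: "simple_graph V E" and con: "connected_graph V E"
    and ac: "acyclic_graph V E" using T unfolding finite_tree_def by auto
  have qV: "q \<in> V - {l}" using simple_E[OF sg lq] by blast
  have sg': "simple_graph (V - {l}) (rm E l)"
    using sg unfolding simple_graph_def rm_def by blast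
  have con': "connected_graph (V - {l}) (rm E l)"
    unfolding connected_graph_def
  proof (intro ballI)
    fix u v assume u: "u \<in> V - {l}" and v: "v \<in> V - {l}"
    obtain m where "reach E m u v" using connected_reach[OF con] u v by blast
    then have "reach (rm E l) m u v" using F1[OF sg leaf] u v by blast
    then show "\<exists>xs. walk (V - {l}) (rm E l) xs u v" using reach_walk[OF sg' u] by blast
  qed
  have ac': "acyclic_graph (V - {l}) (rm E l)"
    unfolding acyclic_graph_def
  proof
    assume "\<exists>xs. is_cycle (V - {l}) (rm E l) xs"
    then obtain xs where c: "is_cycle (V - {l}) (rm E l) xs" by blast
    have "successively E xs" if "successively (rm E l) xs"
      using successively_mono[OF that] unfolding rm_def by blast
    then have "is_cycle V E xs" using c unfolding is_cycle_def walk_alt rm_def by blast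
    then show False using ac unfolding acyclic_graph_def by blast
  qed
  show ?thesis unfolding finite_tree_def using fin qV sg' con' ac' by blast
qed




definition Inv :: "'a set \<Rightarrow> ('a \<Rightarrow> 'a \<Rightarrow> bool) \<Rightarrow> 'a \<Rightarrow> ('a \<Rightarrow> 'a) \<Rightarrow> ('a \<Rightarrow> nat) \<Rightarrow> ('a \<Rightarrow> real) \<Rightarrow> ('a \<Rightarrow> real) \<Rightarrow> bool" where
  "Inv V E r par d p e \<longleftrightarrow>
    r \<in> V \<and> (\<forall>v\<in>V. par v \<in> V) \<and> par r = r \<and> d r = 0 \<and>
    (\<forall>v\<in>V. v \<noteq> r \<longrightarrow> d v = Suc (d (par v))) \<and>
    (\<forall>v\<in>V. p v < e v) \<and>
    (\<forall>x\<in>V. \<forall>v\<in>V. (p x \<le> p v \<and> p v \<le> e x) \<longleftrightarrow> (\<exists>i. (par^^i) v = x)) \<and>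
    (\<forall>x\<in>V. \<forall>v\<in>V. p x \<le> p v \<and> p v \<le> e x \<and> x \<noteq> v \<longrightarrow> e v < e x) \<and>
    (\<forall>x\<in>V. \<forall>y\<in>V. \<not>(p x \<le> p y \<and> p y \<le> e x) \<and> \<not>(p y \<le> p x \<and> p x \<le> e y) \<longrightarrow> e x < p y \<or> e y < p x) \<and>
    (\<forall>u\<in>V. \<forall>v\<in>V. \<forall>m. reach E m u v \<longleftrightarrow> (\<exists>i j. i + j \<le> m \<and> (par^^i) u = (par^^j) v))"

lemma funpow_agree:
  assumes "\<forall>x\<in>W. f x \<in> W \<and> g x = f x" and "v \<in> W"
  shows "(g^^i) v = (f^^i) v \<and> (f^^i) v \<in> W"
  by (induction i) (use assms in auto)

lemma inv_single: "Inv {r} E r (\<lambda>_. r) (\<lambda>_. 0) (\<lambda>_. 0) (\<lambda>_. 1)"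
proof -
  have "((\<lambda>_. r)^^i) r = r" for i by (induction i) auto
  moreover have "\<exists>i j. i + j \<le> m \<and> ((\<lambda>_. r)^^i) r = ((\<lambda>_. r)^^j) r" for m
    by (rule exI[of _ 0], rule exI[of _ 0]) simp
  ultimately show ?thesis unfolding Inv_def by auto
qed

lemma inv_step:
  assumes fin: "finite V" and sg: "simple_graph V E" and lV: "l \<in> V" and lq: "E l q" and leaf: "\<forall>y. E l y \<longrightarrow> y = q"
    and I: "Inv (V - {l}) (rm E l) r par d p e"
  shows "\<exists>r par d p e. Inv V E r par d p e"
proof -
  define V' where "V' = V - {l}"
  have VV: "V = insert l V'" "l \<notin> V'" using lV unfolding V'_def by auto
  have qV: "q \<in> V'" using simple_E[OF sg lq] unfolding V'_def by blast
  note Iu = I[unfolded Inv_def, folded V'_def]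
  note I1 = conjunct1[OF Iu]
  note I2 = conjunct1[OF conjunct2[OF Iu]]
  note I3 = conjunct1[OF conjunct2[OF conjunct2[OF Iu]]]
  note I4 = conjunct1[OF conjunct2[OF conjunct2[OF conjunct2[OF Iu]]]]
  note I5 = conjunct1[OF conjunct2[OF conjunct2[OF conjunct2[OF conjunct2[OF Iu]]]]]
  note I6 = conjunct1[OF conjunct2[OF conjunct2[OF conjunct2[OF conjunct2[OF conjunct2[OF Iu]]]]]]
  note I7 = conjunct1[OF conjunct2[OF conjunct2[OF conjunct2[OF conjunct2[OF conjunct2[OF conjunct2[OF Iu]]]]]]]
  note I8 = conjunct1[OF conjunct2[OF conjunct2[OF conjunct2[OF conjunct2[OF conjunct2[OF conjunct2[OF conjunct2[OF Iu]]]]]]]]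
  note I9 = conjunct1[OF conjunct2[OF conjunct2[OF conjunct2[OF conjunct2[OF conjunct2[OF conjunct2[OF conjunct2[OF conjunct2[OF Iu]]]]]]]]]
  note I10 = conjunct2[OF conjunct2[OF conjunct2[OF conjunct2[OF conjunct2[OF conjunct2[OF conjunct2[OF conjunct2[OF conjunct2[OF Iu]]]]]]]]]

  have finV': "finite V'" using fin unfolding V'_def by blast
  define S where "S = p ` {y\<in>V'. p y < e q} \<union> e ` {y\<in>V'. e y < e q}"
  define M where "M = Max S"
  have finS: "finite S" unfolding S_def using finV' by auto
  have pqS: "p q \<in> S" unfolding S_def using qV I6 by blast
  have MS: "M \<in> S" unfolding M_def using finS pqS Max_in by blast
  have Mlt: "M < e q" using MS unfolding S_def by auto
  have Mp: "p y \<le> M" if "y \<in> V'" "p y < e q" for y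
    unfolding M_def using finS that by (intro Max_ge) (auto simp: S_def)
  have Me: "e y \<le> M" if "y \<in> V'" "e y < e q" for y
    unfolding M_def using finS that by (intro Max_ge) (auto simp: S_def)
  define pl where "pl = M + (e q - M) / 3"
  define el where "el = M + 2 * (e q - M) / 3"
  have ineq: "M < pl" "pl < el" "el < e q" using Mlt unfolding pl_def el_def by (auto simp: field_simps)
  define par' where "par' = par(l := q)"
  define d' where "d' = d(l := Suc (d q))"
  define p' where "p' = p(l := pl)"
  define e' where "e' = e(l := el)"
  have agree: "(par'^^i) v = (par^^i) v \<and> (par^^i) v \<in> V'" if "v \<in> V'" for v i
    using funpow_agree[of V' par par' v i] that I2 VV(2) unfolding par'_def by auto
  have ancl: "(par'^^(Suc i)) l = (par^^i) q" for i
    using agree[OF qV, of i] unfolding funpow_Suc_right par'_def by simp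
  have keyA: "(p x \<le> pl \<and> pl \<le> e x) \<longleftrightarrow> (p x < e q \<and> e q \<le> e x)" if xV: "x \<in> V'" for x
  proof -
    have h1: "p x \<le> pl \<longleftrightarrow> p x < e q"
    proof
      assume "p x < e q" then show "p x \<le> pl" using Mp[OF xV] ineq by linarith
    qed (use ineq in linarith)
    have h2: "pl \<le> e x \<longleftrightarrow> e q \<le> e x"
    proof
      assume a: "pl \<le> e x" show "e q \<le> e x"
      proof (rule ccontr)
        assume "\<not> e q \<le> e x"
        then have "e x \<le> M" using Me[OF xV] by linarith
        then show False using a ineq by linarith
      qed
    qed (use ineq in linarith)
    show "(p x \<le> pl \<and> pl \<le> e x) \<longleftrightarrow> (p x < e q \<and> e q \<le> e x)"
      using h1 h2 by blast
  qed
  have key: "(p x \<le> pl \<and> pl \<le> e x) \<longleftrightarrow> (p x \<le> p q \<and> p q \<le> e x)" if xV: "x \<in> V'" for x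
  proof -
    have "(p x \<le> pl \<and> pl \<le> e x) \<longleftrightarrow> (p x < e q \<and> e q \<le> e x)"
      using keyA[OF xV] .
    also have "\<dots> \<longleftrightarrow> (p x \<le> p q \<and> p q \<le> e x)"
    proof
      assume a: "p x < e q \<and> e q \<le> e x"
      show "p x \<le> p q \<and> p q \<le> e x"
      proof (cases "p q \<le> p x \<and> p x \<le> e q")
        case True
        show ?thesis
        proof (cases "x = q")
          case False
          then have "e x < e q" using I8 True xV qV by blast
          then show ?thesis using a by simp
        qed (use I6 qV in force)
      next
        case False
        show ?thesis
        proof (rule ccontr)
          assume "\<not> (p x \<le> p q \<and> p q \<le> e x)"
          then have "e x < p q \<or> e q < p x" using I9 False xV qV by blast
          then show False using a I6 qV by force
        qed
      qed
    next
      assume a: "p x \<le> p q \<and> p q \<le> e x"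
      show "p x < e q \<and> e q \<le> e x"
      proof (cases "x = q")
        case True then show ?thesis using I6 qV by simp
      next
        case False
        then have "e q < e x" using I8 a xV qV by blast
        moreover have "p q < e q" using I6 qV by blast
        ultimately show ?thesis using a by linarith
      qed
    qed
    finally show ?thesis .
  qed
  have notbelow: "\<not> (pl \<le> p v \<and> p v \<le> el)" if "v \<in> V'" for v
  proof
    assume a: "pl \<le> p v \<and> p v \<le> el"
    then have "p v < e q" using ineq by linarith
    then have "p v \<le> M" using Mp[OF that] by blast
    then show False using a ineq by linarith
  qed
  have anq: "(\<exists>i. (par'^^i) l = x) \<longleftrightarrow> (\<exists>i. (par^^i) q = x)" if "x \<in> V'" for x
  proof
    assume "\<exists>i. (par'^^i) l = x"
    then obtain i where i: "(par'^^i) l = x" by blast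
    then show "\<exists>i. (par^^i) q = x" using that VV(2) ancl by (cases i) auto
  next
    assume "\<exists>i. (par^^i) q = x"
    then show "\<exists>i. (par'^^i) l = x" using ancl by blast
  qed
  have lnr: "r \<noteq> l" using I1 VV(2) by blast
  have qnl: "q \<noteq> l" using qV VV(2) by blast
  have parV: "par v \<in> V'" "par v \<noteq> l" if "v \<in> V'" for v using I2 that VV(2) by auto
  have c2: "\<forall>v\<in>V. par' v \<in> V"
    using parV qV VV unfolding par'_def by auto
  have c3: "par' r = r" using lnr I3 unfolding par'_def by simp
  have c4: "d' r = 0" using lnr I4 unfolding d'_def by simp
  have c5: "\<forall>v\<in>V. v \<noteq> r \<longrightarrow> d' v = Suc (d' (par' v))"
  proof (intro ballI impI)
    fix v assume v: "v \<in> V" "v \<noteq> r"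
    show "d' v = Suc (d' (par' v))"
    proof (cases "v = l")
      case True then show ?thesis using qnl unfolding d'_def par'_def by simp
    next
      case False
      then have "v \<in> V'" using v VV by blast
      then show ?thesis using I5 v(2) parV False unfolding d'_def par'_def by simp
    qed
  qed
  have c6: "\<forall>v\<in>V. p' v < e' v" using I6 ineq VV unfolding p'_def e'_def by auto
  have c7: "(p' x \<le> p' v \<and> p' v \<le> e' x) \<longleftrightarrow> (\<exists>i. (par'^^i) v = x)" if "x \<in> V" "v \<in> V" for x v
  proof (cases "x = l")
    case True
    show ?thesis
    proof (cases "v = l")
      case True
      then show ?thesis using \<open>x = l\<close> ineq unfolding p'_def e'_def by (auto intro: exI[of _ 0])
    next
      case False
      then have vV: "v \<in> V'" using that VV by blast
      have "\<not> (\<exists>i. (par'^^i) v = x)" using agree[OF vV] VV(2) True by metis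
      moreover have "\<not> (p' x \<le> p' v \<and> p' v \<le> e' x)"
        using notbelow[OF vV] True False unfolding p'_def e'_def by simp
      ultimately show ?thesis by blast
    qed
  next
    case False
    then have xV: "x \<in> V'" using that VV by blast
    show ?thesis
    proof (cases "v = l")
      case True
      have "(p' x \<le> p' v \<and> p' v \<le> e' x) \<longleftrightarrow> (p x \<le> p q \<and> p q \<le> e x)"
        using key[OF xV] True False unfolding p'_def e'_def by simp
      also have "\<dots> \<longleftrightarrow> (\<exists>i. (par^^i) q = x)" using I7 xV qV by blast
      also have "\<dots> \<longleftrightarrow> (\<exists>i. (par'^^i) v = x)" using anq[OF xV] True by simp
      finally show ?thesis .
    next
      case False
      then have vV: "v \<in> V'" using that VV by blast
      have "(p' x \<le> p' v \<and> p' v \<le> e' x) \<longleftrightarrow> (p x \<le> p v \<and> p v \<le> e x)"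
        using \<open>x \<noteq> l\<close> False unfolding p'_def e'_def by simp
      also have "\<dots> \<longleftrightarrow> (\<exists>i. (par^^i) v = x)" using I7 xV vV by blast
      also have "\<dots> \<longleftrightarrow> (\<exists>i. (par'^^i) v = x)" using agree[OF vV] by simp
      finally show ?thesis .
    qed
  qed
  have c8: "e' v < e' x" if "x \<in> V" "v \<in> V" "p' x \<le> p' v \<and> p' v \<le> e' x" "x \<noteq> v" for x v
  proof (cases "x = l")
    case True
    then have "v \<noteq> l" "v \<in> V'" using that VV by auto
    then show ?thesis using notbelow[of v] that(3) True unfolding p'_def e'_def by simp
  next
    case False
    then have xV: "x \<in> V'" using that VV by blast
    show ?thesis
    proof (cases "v = l")
      case True
      then have "p x \<le> p q \<and> p q \<le> e x" using key[OF xV] that(3) False unfolding p'_def e'_def by simp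
      then have "e q \<le> e x" using I8 xV qV by (cases "x = q") force+
      then show ?thesis using True False ineq unfolding e'_def by simp
    next
      case False
      then have vV: "v \<in> V'" using that VV by blast
      then show ?thesis using I8 xV that(3,4) \<open>x \<noteq> l\<close> False unfolding p'_def e'_def by simp
    qed
  qed
  have c9l: "el < p y \<or> e y < pl" if yV: "y \<in> V'" and n: "\<not> (p y \<le> pl \<and> pl \<le> e y)" for y
  proof (cases "e q \<le> p y")
    case True then show ?thesis using ineq by linarith
  next
    case False
    then have "\<not> e q \<le> e y" using n keyA[OF yV] by linarith
    then have "e y \<le> M" using Me[OF yV] by linarith
    then show ?thesis using ineq by linarith
  qed
  have c9: "e' x < p' y \<or> e' y < p' x" if "x \<in> V" "y \<in> V"
     "\<not>(p' x \<le> p' y \<and> p' y \<le> e' x)" "\<not>(p' y \<le> p' x \<and> p' x \<le> e' y)" for x y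
  proof (cases "x = l")
    case True
    show ?thesis
    proof (cases "y = l")
      case True then show ?thesis using \<open>x = l\<close> that(3) ineq unfolding p'_def e'_def by simp
    next
      case False
      then have "y \<in> V'" using that VV by blast
      then show ?thesis using c9l[of y] that(4) True False unfolding p'_def e'_def by simp
    qed
  next
    case False
    then have xV: "x \<in> V'" using that VV by blast
    show ?thesis
    proof (cases "y = l")
      case True
      then show ?thesis using c9l[OF xV] that(3) True False unfolding p'_def e'_def by auto
    next
      case False
      then have "y \<in> V'" using that VV by blast
      then show ?thesis using I9 xV that(3,4) \<open>x \<noteq> l\<close> False unfolding p'_def e'_def by simp
    qed
  qed
  have symE: "\<And>x y. E x y \<Longrightarrow> E y x" using simple_E[OF sg] by blast
  have rV': "reach E m u v \<longleftrightarrow> reach (rm E l) m u v" if "u \<in> V'" "v \<in> V'" for m u v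
    using F1[OF sg leaf, of m u v] reach_Emono[of "rm E l" m u v E] that VV(2) unfolding rm_def by auto
  have c10l: "reach E m l v \<longleftrightarrow> (\<exists>i j. i + j \<le> m \<and> (par'^^i) l = (par'^^j) v)" if vV: "v \<in> V'" for m v
  proof -
    have "reach E m l v \<longleftrightarrow> (\<exists>m'. m = Suc m' \<and> reach (rm E l) m' q v)"
    proof -
      have "v \<noteq> l" using vV VV(2) by blast
      then show ?thesis using F2[OF sg leaf lq] by blast
    qed
    also have "\<dots> \<longleftrightarrow> (\<exists>m'. m = Suc m' \<and> (\<exists>i j. i + j \<le> m' \<and> (par^^i) q = (par^^j) v))"
      using I10 qV vV by blast
    also have "\<dots> \<longleftrightarrow> (\<exists>i j. i + j \<le> m \<and> (par'^^i) l = (par'^^j) v)"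
    proof
      assume "\<exists>m'. m = Suc m' \<and> (\<exists>i j. i + j \<le> m' \<and> (par^^i) q = (par^^j) v)"
      then obtain m' i j where "m = Suc m'" "i + j \<le> m'" "(par^^i) q = (par^^j) v" by blast
      then show "\<exists>i j. i + j \<le> m \<and> (par'^^i) l = (par'^^j) v"
        using ancl[of i] agree[OF vV, of j] by (intro exI[of _ "Suc i"] exI[of _ j]) simp
    next
      assume "\<exists>i j. i + j \<le> m \<and> (par'^^i) l = (par'^^j) v"
      then obtain i j where ij: "i + j \<le> m" "(par'^^i) l = (par'^^j) v" by blast
      show "\<exists>m'. m = Suc m' \<and> (\<exists>i j. i + j \<le> m' \<and> (par^^i) q = (par^^j) v)"
      proof (cases i)
        case 0
        then have "l = (par^^j) v" using ij agree[OF vV, of j] by simp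
        then show ?thesis using agree[OF vV, of j] VV(2) by simp
      next
        case (Suc i')
        then have "(par^^i') q = (par^^j) v" using ij ancl[of i'] agree[OF vV, of j] by simp
        moreover obtain m' where "m = Suc m'" using ij Suc by (cases m) auto
        ultimately show ?thesis using ij Suc by auto
      qed
    qed
    finally show ?thesis .
  qed
  have c10: "reach E m u v \<longleftrightarrow> (\<exists>i j. i + j \<le> m \<and> (par'^^i) u = (par'^^j) v)" if "u \<in> V" "v \<in> V" for m u v
  proof (cases "u = l")
    case True
    show ?thesis
    proof (cases "v = l")
      case True
      have "\<exists>i j. i + j \<le> m \<and> (par'^^i) u = (par'^^j) v"
        using True \<open>u = l\<close> by (intro exI[of _ 0]) simp
      then show ?thesis using True \<open>u = l\<close> by simp
    next
      case False then show ?thesis using c10l[of v m] True that VV by blast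
    qed
  next
    case False
    then have uV: "u \<in> V'" using that VV by blast
    show ?thesis
    proof (cases "v = l")
      case True
      have "reach E m u v \<longleftrightarrow> reach E m v u" using reach_sym[of E, OF symE] by blast
      also have "\<dots> \<longleftrightarrow> (\<exists>i j. i + j \<le> m \<and> (par'^^i) v = (par'^^j) u)" using c10l[OF uV] True by blast
      also have "\<dots> \<longleftrightarrow> (\<exists>i j. i + j \<le> m \<and> (par'^^i) u = (par'^^j) v)"
      proof
        assume "\<exists>i j. i + j \<le> m \<and> (par'^^i) v = (par'^^j) u"
        then obtain i j where "i + j \<le> m" "(par'^^i) v = (par'^^j) u" by blast
        then show "\<exists>i j. i + j \<le> m \<and> (par'^^i) u = (par'^^j) v"
          by (intro exI[of _ j] exI[of _ i]) simp
      next
        assume "\<exists>i j. i + j \<le> m \<and> (par'^^i) u = (par'^^j) v"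
        then obtain i j where "i + j \<le> m" "(par'^^i) u = (par'^^j) v" by blast
        then show "\<exists>i j. i + j \<le> m \<and> (par'^^i) v = (par'^^j) u"
          by (intro exI[of _ j] exI[of _ i]) simp
      qed
      finally show ?thesis .
    next
      case False
      then have vV: "v \<in> V'" using that VV by blast
      have "reach E m u v \<longleftrightarrow> (\<exists>i j. i + j \<le> m \<and> (par^^i) u = (par^^j) v)"
        using rV'[OF uV vV] I10 uV vV by blast
      then show ?thesis using agree[OF uV] agree[OF vV] by simp
    qed
  qed
  have "Inv V E r par' d' p' e'"
    unfolding Inv_def
  proof (intro conjI)
    show "r \<in> V" using VV I1 by blast
    show "\<forall>x\<in>V. \<forall>v\<in>V. (p' x \<le> p' v \<and> p' v \<le> e' x) \<longleftrightarrow> (\<exists>i. (par'^^i) v = x)"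
      using c7 by blast
    show "\<forall>x\<in>V. \<forall>v\<in>V. p' x \<le> p' v \<and> p' v \<le> e' x \<and> x \<noteq> v \<longrightarrow> e' v < e' x"
      using c8 by blast
    show "\<forall>x\<in>V. \<forall>y\<in>V. \<not>(p' x \<le> p' y \<and> p' y \<le> e' x) \<and> \<not>(p' y \<le> p' x \<and> p' x \<le> e' y) \<longrightarrow> e' x < p' y \<or> e' y < p' x"
      using c9 by blast
    show "\<forall>u\<in>V. \<forall>v\<in>V. \<forall>m. reach E m u v \<longleftrightarrow> (\<exists>i j. i + j \<le> m \<and> (par'^^i) u = (par'^^j) v)"
      using c10 by blast
  qed (fact c2 c3 c4 c5 c6)+
  then show ?thesis by blast
qed




lemma exists_inv: "finite_tree V E \<Longrightarrow> \<exists>r par d p e. Inv V E r par d p e"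
proof (induction "card V" arbitrary: V E rule: less_induct)
  case less
  have fin: "finite V" and sg: "simple_graph V E" and ne: "V \<noteq> {}"
    using less.prems unfolding finite_tree_def by auto
  show ?case
  proof (cases "\<exists>u v. u \<in> V \<and> v \<in> V \<and> u \<noteq> v")
    case True
    then obtain u v where uv: "u \<in> V" "v \<in> V" "u \<noteq> v" by blast
    obtain l q where lq: "l \<in> V" "E l q" "\<forall>y. E l y \<longrightarrow> y = q"
      using leaf_exists[OF less.prems uv] by blast
    have T': "finite_tree (V - {l}) (rm E l)" using sub_tree[OF less.prems lq] .
    have cl: "card (V - {l}) < card V" by (rule card_Diff1_less[OF fin lq(1)])
    have "\<exists>r par d p e. Inv (V - {l}) (rm E l) r par d p e"
      by (rule less.hyps[OF cl T'])
    then obtain r par d p e where "Inv (V - {l}) (rm E l) r par d p e" by blast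
    then show ?thesis by (rule inv_step[OF fin sg lq(1) lq(2) lq(3)])
  next
    case False
    obtain r where r: "r \<in> V" using ne by blast
    have "V = {r}"
    proof
      show "V \<subseteq> {r}" using False r by blast
    qed (use r in blast)
    then show ?thesis using inv_single[of r E] by blast
  qed
qed

lemma funpow_split: "i \<le> b \<Longrightarrow> (f^^b) x = (f^^(b - i)) ((f^^i) x)"
  by (metis funpow_add comp_apply le_add_diff_inverse2)

lemma funpow_comb: "(f^^a) ((f^^b) x) = (f^^(a + b)) x"
  by (simp add: funpow_add)

context
  fixes V E r par d p e
  assumes I: "Inv V E r par d p e"
begin

lemma Iall: "r \<in> V \<and> (\<forall>v\<in>V. par v \<in> V) \<and> par r = r \<and> d r = 0 \<and>
    (\<forall>v\<in>V. v \<noteq> r \<longrightarrow> d v = Suc (d (par v))) \<and>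
    (\<forall>v\<in>V. p v < e v) \<and>
    (\<forall>x\<in>V. \<forall>v\<in>V. (p x \<le> p v \<and> p v \<le> e x) \<longleftrightarrow> (\<exists>i. (par^^i) v = x)) \<and>
    (\<forall>x\<in>V. \<forall>v\<in>V. p x \<le> p v \<and> p v \<le> e x \<and> x \<noteq> v \<longrightarrow> e v < e x) \<and>
    (\<forall>x\<in>V. \<forall>y\<in>V. \<not>(p x \<le> p y \<and> p y \<le> e x) \<and> \<not>(p y \<le> p x \<and> p x \<le> e y) \<longrightarrow> e x < p y \<or> e y < p x) \<and>
    (\<forall>u\<in>V. \<forall>v\<in>V. \<forall>m. reach E m u v \<longleftrightarrow> (\<exists>i j. i + j \<le> m \<and> (par^^i) u = (par^^j) v))"
  using I unfolding Inv_def .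

lemmas I1 = conjunct1[OF Iall]
lemmas I2 = conjunct1[OF conjunct2[OF Iall]]
lemmas I3 = conjunct1[OF conjunct2[OF conjunct2[OF Iall]]]
lemmas I4 = conjunct1[OF conjunct2[OF conjunct2[OF conjunct2[OF Iall]]]]
lemmas I5 = conjunct1[OF conjunct2[OF conjunct2[OF conjunct2[OF conjunct2[OF Iall]]]]]
lemmas I6 = conjunct1[OF conjunct2[OF conjunct2[OF conjunct2[OF conjunct2[OF conjunct2[OF Iall]]]]]]
lemmas I7 = conjunct1[OF conjunct2[OF conjunct2[OF conjunct2[OF conjunct2[OF conjunct2[OF conjunct2[OF Iall]]]]]]]
lemmas I8 = conjunct1[OF conjunct2[OF conjunct2[OF conjunct2[OF conjunct2[OF conjunct2[OF conjunct2[OF conjunct2[OF Iall]]]]]]]]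
lemmas I9 = conjunct1[OF conjunct2[OF conjunct2[OF conjunct2[OF conjunct2[OF conjunct2[OF conjunct2[OF conjunct2[OF conjunct2[OF Iall]]]]]]]]]
lemmas I10 = conjunct2[OF conjunct2[OF conjunct2[OF conjunct2[OF conjunct2[OF conjunct2[OF conjunct2[OF conjunct2[OF conjunct2[OF Iall]]]]]]]]]

lemma ancV: "v \<in> V \<Longrightarrow> (par^^i) v \<in> V"
  by (induction i) (use I2 in auto)

lemma depth: "v \<in> V \<Longrightarrow> d ((par^^i) v) = d v - i"
proof (induction i)
  case (Suc i)
  define w where "w = (par^^i) v"
  have wV: "w \<in> V" using ancV[OF Suc.prems] unfolding w_def .
  have "(par^^Suc i) v = par w" unfolding w_def by simp
  moreover have "d (par w) = d w - 1"
  proof (cases "w = r")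
    case True then show ?thesis using I3 I4 by simp
  next
    case False then show ?thesis using I5 wV by simp
  qed
  ultimately show ?case using Suc unfolding w_def by simp
qed simp

lemma d0: assumes "x \<in> V" "d x = 0" shows "x = r"
proof (rule ccontr)
  assume "x \<noteq> r"
  then have "d x = Suc (d (par x))" using I5 assms(1) by blast
  then show False using assms(2) by simp
qed

lemma anc_root: "v \<in> V \<Longrightarrow> d v \<le> i \<Longrightarrow> (par^^i) v = r"
  using d0[OF ancV] depth by simp

definition A where "A x v \<longleftrightarrow> p x \<le> p v \<and> p v \<le> e x"

lemma A_anc: "v \<in> V \<Longrightarrow> A ((par^^i) v) v"
  using I7 ancV unfolding A_def by blast

lemma A_ex: "x \<in> V \<Longrightarrow> v \<in> V \<Longrightarrow> A x v \<Longrightarrow> \<exists>i. (par^^i) v = x"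
  using I7 unfolding A_def by blast

lemma A_form: assumes "x \<in> V" "v \<in> V" "A x v" shows "x = (par^^(d v - d x)) v" "d x \<le> d v"
proof -
  obtain i where i: "(par^^i) v = x" using A_ex assms by blast
  have dx: "d x = d v - i" using depth[OF assms(2), of i] i by simp
  show "d x \<le> d v" using dx by simp
  show "x = (par^^(d v - d x)) v"
  proof (cases "i \<le> d v")
    case True then show ?thesis using dx i by simp
  next
    case False
    then have "x = r" using anc_root[OF assms(2)] i by simp
    moreover have "(par^^(d v - d x)) v = r" using anc_root[OF assms(2)] dx False by simp
    ultimately show ?thesis by simp
  qed
qed

lemma A_trans: assumes "x \<in> V" "y \<in> V" "v \<in> V" "A x y" "A y v" shows "A x v"
proof -
  obtain i where i: "(par^^i) v = y" using A_ex assms by blast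
  obtain j where j: "(par^^j) y = x" using A_ex assms by blast
  have "(par^^(j + i)) v = x" using i j by (simp add: funpow_add)
  then show ?thesis using A_anc[OF assms(3), of "j + i"] by simp
qed

lemma A_antisym: assumes "x \<in> V" "v \<in> V" "A x v" "A v x" shows "x = v"
proof (rule ccontr)
  assume n: "x \<noteq> v"
  have "e v < e x" using I8 assms n unfolding A_def by blast
  moreover have "e x < e v" using I8 assms n unfolding A_def by blast
  ultimately show False by simp
qed

lemma A_lam: "x \<in> V \<Longrightarrow> y \<in> V \<Longrightarrow> \<not> A x y \<Longrightarrow> \<not> A y x \<Longrightarrow> e x < p y \<or> e y < p x"
  using I9 unfolding A_def by blast

definition L :: "nat \<Rightarrow> 'a \<Rightarrow> nat \<Rightarrow> real" where
  "L k v s = (if s = 0 then real (d v) else p ((par^^(k - s)) v))"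
definition H :: "nat \<Rightarrow> 'a \<Rightarrow> nat \<Rightarrow> real" where
  "H k v s = (if s = 0 then real (d v) + real k else e ((par^^(s - 1)) v))"

lemma LH: "v \<in> V \<Longrightarrow> L k v s \<le> H k v s"
  using A_anc[of v] unfolding L_def H_def A_def by (cases "s = 0") (auto, smt (verit))

lemma fwd:
  assumes uV: "u \<in> V" and vV: "v \<in> V" and puv: "p u < p v" and ij: "i + j \<le> k"
    and w: "(par^^i) u = (par^^j) v" and s: "s < Suc k"
  shows "L k u s \<le> H k v s \<and> L k v s \<le> H k u s"
proof (cases "s = 0")
  case True
  have "d ((par^^i) u) = d u - i" "d ((par^^j) v) = d v - j" using depth uV vV by auto
  then have "d u - i = d v - j" using w by simp
  then have "d u \<le> d v + k \<and> d v \<le> d u + k" using ij by arith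
  then show ?thesis unfolding L_def H_def using True by simp
next
  case False
  define al where "al = k - s"
  define be where "be = s - 1"
  have Ls: "L k u s = p ((par^^al) u)" "L k v s = p ((par^^al) v)" unfolding L_def al_def using False by auto
  have Hs: "H k u s = e ((par^^be) u)" "H k v s = e ((par^^be) v)" unfolding H_def be_def using False by auto
  have "p ((par^^al) u) \<le> p u" "p v \<le> e ((par^^be) v)" using A_anc[OF uV] A_anc[OF vV] unfolding A_def by auto
  then have c1: "L k u s \<le> H k v s" using puv Ls Hs by simp
  have c2: "p ((par^^al) v) \<le> e ((par^^be) u)"
  proof (cases "i \<le> be")
    case True
    have "(par^^be) u = (par^^(be - i)) ((par^^i) u)" using funpow_split[OF True] .
    also have "\<dots> = (par^^(be - i + j)) v" using w by (simp add: funpow_add)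
    finally have "A ((par^^be) u) v" using A_anc[OF vV] by simp
    moreover have "p ((par^^al) v) \<le> p v" using A_anc[OF vV] unfolding A_def by blast
    ultimately show ?thesis unfolding A_def by simp
  next
    case False
    then have jal: "j \<le> al" using ij s \<open>s \<noteq> 0\<close> unfolding al_def be_def by linarith
    have "(par^^al) v = (par^^(al - j)) ((par^^j) v)" using funpow_split[OF jal] .
    also have "\<dots> = (par^^(al - j + i)) u" using w by (simp add: funpow_add)
    finally have "A ((par^^al) v) u" using A_anc[OF uV] by simp
    moreover have "p u \<le> e ((par^^be) u)" using A_anc[OF uV] unfolding A_def by blast
    ultimately show ?thesis unfolding A_def by simp
  qed
  show ?thesis using c1 c2 Ls Hs by simp
qed


lemma bwd:
  assumes uV: "u \<in> V" and vV: "v \<in> V" and puv: "p u < p v" and k1: "1 \<le> k"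
    and no: "\<not> (\<exists>i j. i + j \<le> k \<and> (par^^i) u = (par^^j) v)"
  shows "\<exists>s < Suc k. \<not> (L k u s \<le> H k v s \<and> L k v s \<le> H k u s)"
proof -
  define Q where "Q i \<longleftrightarrow> A ((par^^i) u) v" for i
  have Qdu: "Q (d u)"
  proof -
    have "(par^^(d u)) u = r" using anc_root[OF uV] by simp
    moreover have "(par^^(d v)) v = r" using anc_root[OF vV] by simp
    ultimately show ?thesis unfolding Q_def using A_anc[OF vV, of "d v"] by simp
  qed
  define i0 where "i0 = (LEAST i. Q i)"
  have Qi0: "Q i0" unfolding i0_def using Qdu by (rule LeastI)
  have i0le: "i0 \<le> d u" unfolding i0_def using Qdu by (rule Least_le)
  have notQ: "\<not> Q i" if "i < i0" for i using not_less_Least[of i Q] that unfolding i0_def by blast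
  define w where "w = (par^^i0) u"
  have wV: "w \<in> V" unfolding w_def using ancV[OF uV] .
  have Awv: "A w v" using Qi0 unfolding Q_def w_def .
  define j0 where "j0 = d v - d w"
  have wj0: "w = (par^^j0) v" using A_form(1)[OF wV vV Awv] unfolding j0_def .
  have dw: "d w = d u - i0" unfolding w_def using depth[OF uV] .
  have dwv: "d w \<le> d v" using A_form(2)[OF wV vV Awv] .
  have big: "k < i0 + j0"
  proof (rule ccontr)
    assume "\<not> k < i0 + j0"
    then have "i0 + j0 \<le> k" by simp
    then show False using no w_def wj0 by blast
  qed
  show ?thesis
  proof (cases "i0 = 0")
    case True
    then have "w = u" unfolding w_def by simp
    then have "d v > d u + k" using big True j0_def by simp
    then have "\<not> (L k v 0 \<le> H k u 0)" unfolding L_def H_def by simp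
    then show ?thesis by blast
  next
    case i0pos: False
    show ?thesis
    proof (cases "j0 = 0")
      case True
      then have "w = v" using wj0 by simp
      then have "d u > d v + k" using big True dw i0le by simp
      then have "\<not> (L k u 0 \<le> H k v 0)" unfolding L_def H_def by simp
      then show ?thesis by blast
    next
      case j0pos: False
      define s where "s = min i0 k"
      define al where "al = k - s"
      define be where "be = s - 1"
      have s1: "1 \<le> s" "s \<le> k" unfolding s_def using i0pos k1 by auto
      have bei: "be < i0" unfolding be_def s_def using i0pos by simp
      have alj: "al < j0" unfolding al_def s_def using big j0pos by auto
      define X where "X = (par^^be) u"
      define Y where "Y = (par^^al) v"
      have XV: "X \<in> V" "Y \<in> V" unfolding X_def Y_def using ancV uV vV by auto
      have nXv: "\<not> A X v" using notQ[OF bei] unfolding Q_def X_def .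
      have nYu: "\<not> A Y u"
      proof
        assume AYu: "A Y u"
        have Yf: "Y = (par^^(d u - d Y)) u" using A_form(1)[OF XV(2) uV AYu] .
        have dY: "d Y = d v - al" unfolding Y_def using depth[OF vV] .
        have "j0 \<le> d v" unfolding j0_def by simp
        then have "d Y > d w" using dY alj j0_def dwv by linarith
        moreover have "0 < i0" using i0pos by simp
        ultimately have lt: "d u - d Y < i0" using dw i0le by linarith
        have "A Y v" unfolding Y_def using A_anc[OF vV] .
        then have "Q (d u - d Y)" unfolding Q_def using Yf by simp
        then show False using notQ[OF lt] by blast
      qed
      have AXu: "A X u" unfolding X_def using A_anc[OF uV] .
      have AYv: "A Y v" unfolding Y_def using A_anc[OF vV] .
      have n1: "\<not> A Y X" using A_trans[OF XV(2) XV(1) uV _ AXu] nYu by blast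
      have n2: "\<not> A X Y" using A_trans[OF XV(1) XV(2) vV _ AYv] nXv by blast
      have "e X < p Y \<or> e Y < p X" using A_lam[OF XV n2 n1] .
      moreover have "\<not> e Y < p X" using AXu AYv puv unfolding A_def by linarith
      ultimately have "e X < p Y" by blast
      moreover have "L k v s = p Y" "H k u s = e X"
        unfolding L_def H_def X_def Y_def al_def be_def using s1 by auto
      ultimately have "\<not> (L k v s \<le> H k u s)" by simp
      then show ?thesis using s1 by (intro exI[of _ s]) auto
    qed
  qed
qed

lemma comb:
  assumes uV: "u \<in> V" and vV: "v \<in> V" and uv: "u \<noteq> v" and k1: "1 \<le> k"
  shows "(\<exists>i j. i + j \<le> k \<and> (par^^i) u = (par^^j) v) \<longleftrightarrow>
         (\<forall>s < Suc k. L k u s \<le> H k v s \<and> L k v s \<le> H k u s)"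
proof -
  have pne: "p u \<noteq> p v"
  proof
    assume eq: "p u = p v"
    have "A u v" "A v u" using eq I6 uV vV unfolding A_def by auto
    then show False using A_antisym uV vV uv by blast
  qed
  have sw: "(\<exists>i j. i + j \<le> k \<and> (par^^i) u = (par^^j) v) \<longleftrightarrow> (\<exists>i j. i + j \<le> k \<and> (par^^i) v = (par^^j) u)"
  proof
    assume "\<exists>i j. i + j \<le> k \<and> (par^^i) u = (par^^j) v"
    then obtain i j where "i + j \<le> k" "(par^^i) u = (par^^j) v" by blast
    then show "\<exists>i j. i + j \<le> k \<and> (par^^i) v = (par^^j) u" by (intro exI[of _ j] exI[of _ i]) simp
  next
    assume "\<exists>i j. i + j \<le> k \<and> (par^^i) v = (par^^j) u"
    then obtain i j where "i + j \<le> k" "(par^^i) v = (par^^j) u" by blast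
    then show "\<exists>i j. i + j \<le> k \<and> (par^^i) u = (par^^j) v" by (intro exI[of _ j] exI[of _ i]) simp
  qed
  show ?thesis
  proof (cases "p u < p v")
    case True
    show ?thesis
    proof
      assume "\<exists>i j. i + j \<le> k \<and> (par^^i) u = (par^^j) v"
      then show "\<forall>s < Suc k. L k u s \<le> H k v s \<and> L k v s \<le> H k u s"
        using fwd[OF uV vV True] by blast
    next
      assume "\<forall>s < Suc k. L k u s \<le> H k v s \<and> L k v s \<le> H k u s"
      then show "\<exists>i j. i + j \<le> k \<and> (par^^i) u = (par^^j) v"
        using bwd[OF uV vV True k1] by blast
    qed
  next
    case False
    then have True: "p v < p u" using pne by simp
    have "(\<exists>i j. i + j \<le> k \<and> (par^^i) v = (par^^j) u) \<longleftrightarrow>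
         (\<forall>s < Suc k. L k v s \<le> H k u s \<and> L k u s \<le> H k v s)"
    proof
      assume "\<exists>i j. i + j \<le> k \<and> (par^^i) v = (par^^j) u"
      then show "\<forall>s < Suc k. L k v s \<le> H k u s \<and> L k u s \<le> H k v s"
        using fwd[OF vV uV True] by blast
    next
      assume "\<forall>s < Suc k. L k v s \<le> H k u s \<and> L k u s \<le> H k v s"
      then show "\<exists>i j. i + j \<le> k \<and> (par^^i) v = (par^^j) u"
        using bwd[OF vV uV True k1] by blast
    qed
    then show ?thesis using sw by blast
  qed
qed

end

lemma box_inter:
  assumes "\<forall>i<t. L1 i \<le> H1 i" "\<forall>i<t. L2 i \<le> H2 i"
  shows "box_set t L1 H1 \<inter> box_set t L2 H2 \<noteq> {} \<longleftrightarrow> (\<forall>i<t. L1 i \<le> H2 i \<and> L2 i \<le> H1 i)"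
proof
  assume "box_set t L1 H1 \<inter> box_set t L2 H2 \<noteq> {}"
  then obtain x where "x \<in> box_set t L1 H1" "x \<in> box_set t L2 H2" by blast
  then show "\<forall>i<t. L1 i \<le> H2 i \<and> L2 i \<le> H1 i" unfolding box_set_def by force
next
  assume a: "\<forall>i<t. L1 i \<le> H2 i \<and> L2 i \<le> H1 i"
  define x where "x i = (if i < t then max (L1 i) (L2 i) else 0)" for i
  have "x \<in> box_set t L1 H1" "x \<in> box_set t L2 H2" unfolding box_set_def x_def using a assms by auto
  then show "box_set t L1 H1 \<inter> box_set t L2 H2 \<noteq> {}" by blast
qed

theorem theorem1:
  fixes V :: "'a set" and E :: "'a \<Rightarrow> 'a \<Rightarrow> bool" and k :: nat
  assumes "finite_tree V E" and "k \<ge> 1"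
  shows "boxicity V (graph_power V E k) \<le> k + 1"
proof -
  obtain r par d p e where I: "Inv V E r par d p e" using exists_inv[OF assms(1)] by blast
  have sg: "simple_graph V E" using assms(1) unfolding finite_tree_def by blast
  define LL where "LL = L par d p k"
  define HH where "HH = H par d e k"
  have rep: "box_representation V (graph_power V E k) (Suc k)"
    unfolding box_representation_def
  proof (rule exI[of _ LL], rule exI[of _ HH], rule conjI)
    show "\<forall>v\<in>V. \<forall>i<Suc k. LL v i \<le> HH v i" unfolding LL_def HH_def using LH[OF I] by blast
    show "\<forall>u\<in>V. \<forall>v\<in>V. u \<noteq> v \<longrightarrow> (graph_power V E k u v \<longleftrightarrow> box_set (Suc k) (LL u) (HH u) \<inter> box_set (Suc k) (LL v) (HH v) \<noteq> {})"
    proof (intro ballI impI)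
      fix u v assume uV: "u \<in> V" and vV: "v \<in> V" and uv: "u \<noteq> v"
      have "graph_power V E k u v \<longleftrightarrow> reach E k u v"
        unfolding graph_power_def using dist_le_reach[OF sg uV] uV vV uv by blast
      also have "\<dots> \<longleftrightarrow> (\<exists>i j. i + j \<le> k \<and> (par^^i) u = (par^^j) v)"
        using I10[OF I] uV vV by blast
      also have "\<dots> \<longleftrightarrow> (\<forall>s < Suc k. LL u s \<le> HH v s \<and> LL v s \<le> HH u s)"
        unfolding LL_def HH_def using comb[OF I uV vV uv assms(2)] .
      also have "\<dots> \<longleftrightarrow> box_set (Suc k) (LL u) (HH u) \<inter> box_set (Suc k) (LL v) (HH v) \<noteq> {}"
        using box_inter[of "Suc k" "LL u" "HH u" "LL v" "HH v"] LH[OF I] uV vV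
        unfolding LL_def HH_def by blast
      finally show "graph_power V E k u v \<longleftrightarrow> box_set (Suc k) (LL u) (HH u) \<inter> box_set (Suc k) (LL v) (HH v) \<noteq> {}" .
    qed
  qed
  then have "boxicity V (graph_power V E k) \<le> Suc k" unfolding boxicity_def by (rule wellorder_Least_lemma(2))
  then show ?thesis by simp
qed



end
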